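(* Let $|\psi\rangle$ be a pure three-qubit state and let $\{i,j,k\}=\{A,B,C\}$. Then $S_{ij}>1$ (i.e. $\rho_{ij}$ violates the three-settings CJWR linear steering inequality) if and only if $\mathcal C_{ij}^2>\frac{\mathcal C_{ik}^2+\mathcal C_{jk}^2}{2}$.
   Context: For a two-qubit state $\rho$ let $t_{kl}=\mathrm{Tr}[\rho\,\sigma_k\otimes\sigma_l]$ ($\sigma_k$ Pauli matrices) and $S(\rho)=\sum_{k,l=1}^3 t_{kl}^2$; $\rho_{ij}$ is the reduced state of qubits $i,j$ of $|\psi\rangle$ and $S_{ij}=S(\rho_{ij})$. $\mathcal C_{ij}$ is the Wootters concurrence of $\rho_{ij}$: $\mathcal C(\rho)=\max\{0,\lambda_1-\lambda_2-\lambda_3-\lambda_4\}$, with $\lambda_1\ge\dots\ge\lambda_4$ the square roots of the eigenvalues of $\rho(\sigma_2\otimes\sigma_2)\rho^*(\sigma_2\otimes\sigma_2)$. The three-settings CJWR inequality $\frac1{\sqrt3}|\sum_{k=1}^3\langle A_k\otimes B_k\rangle|\le1$ (unit $\hat a_k$, orthonormal $\hat b_k$) has maximum $\sqrt{S(\rho)}$ over settings, so it is violated iff $S(\rho)>1$. *)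

theory Defs
  imports Complex_Main "Jordan_Normal_Form.Char_Poly"
begin

datatype qubit = QA | QB | QC

text \<open>A three-qubit pure state is given by its amplitudes psi a b c, a b c in {0,1},
  in the computational basis of qubits A, B, C (in this order).\<close>
definition normalized3 :: "(nat \<Rightarrow> nat \<Rightarrow> nat \<Rightarrow> complex) \<Rightarrow> bool" where
  "normalized3 psi \<longleftrightarrow> (\<Sum>a<2. \<Sum>b<2. \<Sum>c<2. (cmod (psi a b c))\<^sup>2) = 1"

definition amp :: "(nat \<Rightarrow> nat \<Rightarrow> nat \<Rightarrow> complex) \<Rightarrow> (qubit \<Rightarrow> nat) \<Rightarrow> complex" where
  "amp psi f = psi (f QA) (f QB) (f QC)"

text \<open>Reduced two-qubit state of qubits i (first factor) and j (second factor),
  tracing out the remaining qubit k; basis index of the 4x4 matrix is 2*x + y.\<close>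
definition reduced :: "(nat \<Rightarrow> nat \<Rightarrow> nat \<Rightarrow> complex) \<Rightarrow> qubit \<Rightarrow> qubit \<Rightarrow> qubit \<Rightarrow> complex mat" where
  "reduced psi i j k = mat 4 4 (\<lambda>(r, s).
     \<Sum>z<2. amp psi ((\<lambda>_. 0)(i := r div 2, j := r mod 2, k := z))
          * cnj (amp psi ((\<lambda>_. 0)(i := s div 2, j := s mod 2, k := z))))"

definition pauli :: "nat \<Rightarrow> complex mat" where
  "pauli k = (if k = 1 then mat_of_rows_list 2 [[0, 1], [1, 0]]
              else if k = 2 then mat_of_rows_list 2 [[0, -\<i>], [\<i>, 0]]
              else mat_of_rows_list 2 [[1, 0], [0, -1]])"

definition kron2 :: "complex mat \<Rightarrow> complex mat \<Rightarrow> complex mat" where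
  "kron2 X Y = mat 4 4 (\<lambda>(r, s). X $$ (r div 2, s div 2) * Y $$ (r mod 2, s mod 2))"

definition mtrace :: "complex mat \<Rightarrow> complex" where
  "mtrace M = (\<Sum>i<dim_row M. M $$ (i, i))"

text \<open>Correlation tensor t_kl = Tr[rho (sigma_k (x) sigma_l)] (real for a density matrix).\<close>
definition corr :: "complex mat \<Rightarrow> nat \<Rightarrow> nat \<Rightarrow> real" where
  "corr rho k l = Re (mtrace (rho * kron2 (pauli k) (pauli l)))"

definition Sval :: "complex mat \<Rightarrow> real" where
  "Sval rho = (\<Sum>k\<in>{1..3}. \<Sum>l\<in>{1..3}. (corr rho k l)\<^sup>2)"

text \<open>Eigenvalues (with algebraic multiplicity) of a 4x4 complex matrix, as a list;
  any choice gives the same multiset.\<close>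
definition eigvals4 :: "complex mat \<Rightarrow> complex list" where
  "eigvals4 M = (SOME es. length es = 4 \<and> char_poly M = (\<Prod>\<mu>\<leftarrow>es. [:-\<mu>, 1:]))"

definition concurrence :: "complex mat \<Rightarrow> real" where
  "concurrence rho =
    (let yy = kron2 (pauli 2) (pauli 2);
         R = rho * yy * map_mat cnj rho * yy;
         lam = rev (sort (map (\<lambda>\<mu>. sqrt (Re \<mu>)) (eigvals4 R)))
     in max 0 (lam ! 0 - lam ! 1 - lam ! 2 - lam ! 3))"

end

theory Submission
  imports Defs
begin


lemma det1: assumes "A \<in> carrier_mat 1 1" shows "det A = A $$ (0,0)"
proof -
  have "det A = (\<Sum>j<1. A $$ (0,j) * cofactor A 0 j)"
    by (rule laplace_expansion_row[OF assms]) auto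
  also have "\<dots> = A $$ (0,0)" using assms
    by (simp add: cofactor_def det_dim_zero[OF mat_delete_carrier[OF assms, simplified]])
  finally show ?thesis .
qed

lemma det2: "det (mat 2 2 f) = f (0,0) * f (1,1) - f (0,1) * (f (1,0) :: 'a :: comm_ring_1)"
proof -
  have "det (mat 2 2 f) = (\<Sum>j<2. mat 2 2 f $$ (0,j) * cofactor (mat 2 2 f) 0 j)"
    by (rule laplace_expansion_row) auto
  also have "\<dots> = f (0,0) * f (1,1) - f (0,1) * f (1,0)"
    by (simp add: numeral_2_eq_2 cofactor_def det1 mat_delete_def)
  finally show ?thesis .
qed

lemma cp_eval: assumes M: "(M :: 'a :: field mat) \<in> carrier_mat n n"
  shows "poly (char_poly M) k = det (k \<cdot>\<^sub>m 1\<^sub>m n - M)"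
proof -
  have "- char_matrix M k = k \<cdot>\<^sub>m 1\<^sub>m n - M"
    using M by (intro eq_matI) (auto simp: char_matrix_def)
  then show ?thesis using char_poly_matrix[OF M] by simp
qed

lemma sylvester_pt:
  fixes A B :: "'a :: field mat"
  assumes A: "A \<in> carrier_mat n m" and B: "B \<in> carrier_mat m n"
  shows "k ^ m * det (k \<cdot>\<^sub>m 1\<^sub>m n - A * B) = k ^ n * det (k \<cdot>\<^sub>m 1\<^sub>m m - B * A)"
proof -
  define Z where "Z = four_block_mat (k \<cdot>\<^sub>m 1\<^sub>m n) A B (1\<^sub>m m)"
  define L1 where "L1 = four_block_mat (1\<^sub>m n) (0\<^sub>m n m) (- B) (k \<cdot>\<^sub>m 1\<^sub>m m)"
  define L2 where "L2 = four_block_mat (1\<^sub>m n) (0\<^sub>m n m) (- B) (1\<^sub>m m)"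
  have Zc: "Z \<in> carrier_mat (n+m) (n+m)" unfolding Z_def using A B by auto
  have L1c: "L1 \<in> carrier_mat (n+m) (n+m)" unfolding L1_def using A B by auto
  have L2c: "L2 \<in> carrier_mat (n+m) (n+m)" unfolding L2_def using A B by auto
  have e1: "L1 * Z = four_block_mat (k \<cdot>\<^sub>m 1\<^sub>m n) A (0\<^sub>m m n) (k \<cdot>\<^sub>m 1\<^sub>m m - B * A)"
    unfolding L1_def Z_def using A B
    by (subst mult_four_block_mat[of _ n n _ m _ m], auto intro!: cong_four_block_mat simp: algebra_simps)
  have e2: "Z * L2 = four_block_mat (k \<cdot>\<^sub>m 1\<^sub>m n - A * B) A (0\<^sub>m m n) (1\<^sub>m m)"
    unfolding L2_def Z_def using A B
    by (subst mult_four_block_mat[of _ n n _ m _ m], auto intro!: cong_four_block_mat simp: algebra_simps)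
  have d1: "det L1 = k ^ m" unfolding L1_def using A B
    by (subst det_four_block_mat_upper_right_zero[of _ n _ m]) auto
  have d2: "det L2 = 1" unfolding L2_def using A B
    by (subst det_four_block_mat_upper_right_zero[of _ n _ m]) auto
  have d3: "det (four_block_mat (k \<cdot>\<^sub>m 1\<^sub>m n) A (0\<^sub>m m n) (k \<cdot>\<^sub>m 1\<^sub>m m - B * A)) = k ^ n * det (k \<cdot>\<^sub>m 1\<^sub>m m - B * A)"
    using A B by (subst det_four_block_mat_lower_left_zero[of _ n _ m]) auto
  have k1: "k ^ m * det Z = k ^ n * det (k \<cdot>\<^sub>m 1\<^sub>m m - B * A)"
    using det_mult[OF L1c Zc] e1 d1 d3 by simp
  have d4: "det (four_block_mat (k \<cdot>\<^sub>m 1\<^sub>m n - A * B) A (0\<^sub>m m n) (1\<^sub>m m)) = det (k \<cdot>\<^sub>m 1\<^sub>m n - A * B)"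
    using A B by (subst det_four_block_mat_lower_left_zero[of _ n _ m]) auto
  have "det Z = det (k \<cdot>\<^sub>m 1\<^sub>m n - A * B)"
    using det_mult[OF Zc L2c] e2 d2 d4 by simp
  then show ?thesis using k1 by simp
qed

lemma sum4: "(\<Sum>k<(4::nat). f k) = f 0 + f 1 + f 2 + (f 3 :: 'a :: comm_monoid_add)"
  by (simp add: eval_nat_numeral add.assoc)
lemma sum2: "(\<Sum>k<(2::nat). f k) = f 0 + (f 1 :: 'a :: comm_monoid_add)"
  by (simp add: eval_nat_numeral)
lemma less4: "(i::nat) < 4 \<Longrightarrow> i = 0 \<or> i = 1 \<or> i = 2 \<or> i = 3" by auto
lemma less2: "(i::nat) < 2 \<Longrightarrow> i = 0 \<or> i = 1" by auto

definition yyf :: "nat \<Rightarrow> nat \<Rightarrow> complex" where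
  "yyf r s = (if r = 0 \<and> s = 3 then -1 else if r = 1 \<and> s = 2 then 1 else
     if r = 2 \<and> s = 1 then 1 else if r = 3 \<and> s = 0 then -1 else 0)"

lemma yy_eq: "kron2 (pauli 2) (pauli 2) = mat 4 4 (\<lambda>(r,s). yyf r s)"
  apply (rule eq_matI)
  apply (auto simp: kron2_def)
  apply (drule less4)+
  apply (auto simp: pauli_def yyf_def mat_of_rows_list_def)
  done

lemma mat_mult_mat: "mat n m f * mat m p g = mat n p (\<lambda>(i,j). \<Sum>k<m. f (i,k) * g (k,j))"
  by (rule eq_matI) (auto simp: scalar_prod_def lessThan_atLeast0 intro!: sum.cong)

definition bil :: "(nat \<Rightarrow> complex) \<Rightarrow> (nat \<Rightarrow> complex) \<Rightarrow> complex" where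
  "bil x y = - x 0 * y 3 + x 1 * y 2 + x 2 * y 1 - x 3 * y 0"

lemma mat_cong2: "(\<And>i j. i < n \<Longrightarrow> j < m \<Longrightarrow> f (i,j) = g (i,j)) \<Longrightarrow> mat n m f = mat n m g"
  by (rule eq_matI) auto

lemma assoc': fixes A B C :: "'a :: comm_ring_1 mat"
  assumes h: "dim_col A = dim_row B" "dim_col B = dim_row C"
  shows "A * B * C = A * (B * C)"
proof -
  have a: "A \<in> carrier_mat (dim_row A) (dim_row B)" using h(1) by (intro carrier_matI) simp_all
  have b: "B \<in> carrier_mat (dim_row B) (dim_row C)" using h(2) by (intro carrier_matI) simp_all
  have c: "C \<in> carrier_mat (dim_row C) (dim_col C)" by (intro carrier_matI) simp_all
  show ?thesis using assoc_mult_mat[OF a b c] .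
qed

lemma cp2: "char_poly (mat 2 2 g) = [: g (0,0) * g (1,1) - g (0,1) * g (1,0), - (g (0,0) + g (1,1)), (1::complex) :]"
proof -
  have "poly (char_poly (mat 2 2 g)) k = poly [: g (0,0) * g (1,1) - g (0,1) * g (1,0), - (g (0,0) + g (1,1)), 1 :] k" for k
  proof -
    have "k \<cdot>\<^sub>m 1\<^sub>m 2 - mat 2 2 g = mat 2 2 (\<lambda>(i,j). (if i = j then k else 0) - g (i,j))"
      by (rule eq_matI) auto
    moreover have "poly (char_poly (mat 2 2 g)) k = det (k \<cdot>\<^sub>m 1\<^sub>m 2 - mat 2 2 g)"
      by (rule cp_eval) auto
    ultimately show ?thesis by (simp add: det2 algebra_simps)
  qed
  then have "poly (char_poly (mat 2 2 g)) = poly [: g (0,0) * g (1,1) - g (0,1) * g (1,0), - (g (0,0) + g (1,1)), 1 :]"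
    by (rule ext)
  then show ?thesis unfolding poly_eq_poly_eq_iff .
qed

lemma sylvester_poly:
  fixes A B :: "complex mat"
  assumes A: "A \<in> carrier_mat n m" and B: "B \<in> carrier_mat m n"
  shows "monom 1 m * char_poly (A * B) = monom 1 n * char_poly (B * A)"
proof -
  have "poly (monom 1 m * char_poly (A * B)) k = poly (monom 1 n * char_poly (B * A)) k" for k
    using sylvester_pt[OF A B, of k] A B
    by (simp add: poly_monom cp_eval[of _ n] cp_eval[of _ m])
  then have "poly (monom 1 m * char_poly (A * B)) = poly (monom 1 n * char_poly (B * A))"
    by (rule ext)
  then show ?thesis unfolding poly_eq_poly_eq_iff .
qed

lemma order_lin: "order x [:- a, 1:] = (if x = a then 1 else (0::nat))" for x a :: complex
proof (cases "x = a")
  case True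
  then show ?thesis using order_power_n_n[of a 1] by simp
next
  case False
  then show ?thesis by (simp add: order_0I)
qed

lemma order_prod_lin: "order x (prod_list (map (\<lambda>\<mu>. [:- \<mu>, 1:]) es)) = count (mset es) (x :: complex)"
proof (induction es)
  case Nil
  then show ?case using order_0I[of 1 x] by simp
next
  case (Cons a es)
  have nz: "prod_list (map (\<lambda>\<mu>. [:- \<mu>, 1:]) es) \<noteq> 0"
    by (auto simp: prod_list_zero_iff)
  have l: "[:- a, 1:] \<noteq> 0" by simp
  have "[:- a, 1:] * prod_list (map (\<lambda>\<mu>. [:- \<mu>, 1:]) es) \<noteq> 0"
    using nz l by (metis mult_eq_0_iff)
  then have "order x ([:- a, 1:] * prod_list (map (\<lambda>\<mu>. [:- \<mu>, 1:]) es)) =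
      order x [:- a, 1:] + order x (prod_list (map (\<lambda>\<mu>. [:- \<mu>, 1:]) es))"
    by (rule order_mult)
  then show ?case using Cons by (simp only: list.map prod_list.Cons order_lin) simp
qed

lemma conc_from_cp:
  fixes R :: "complex mat" and e1 e2 :: real
  assumes cp: "char_poly R = monom 1 2 * [: complex_of_real e2, - complex_of_real e1, 1 :]"
    and e2: "0 \<le> e2" and hdisc: "4 * e2 \<le> e1^2" and e1: "0 \<le> e1"
  shows "rev (sort (map (\<lambda>\<mu>. sqrt (Re \<mu>)) (eigvals4 R))) =
     [sqrt ((e1 + sqrt (e1^2 - 4*e2))/2), sqrt ((e1 - sqrt (e1^2 - 4*e2))/2), 0, 0]"
proof -
  define d where "d = sqrt (e1^2 - 4*e2)"
  define m1 where "m1 = (e1 + d)/2"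
  define m2 where "m2 = (e1 - d)/2"
  have dp: "0 \<le> e1^2 - 4*e2" using hdisc by linarith
  have d0: "0 \<le> d" unfolding d_def using dp by simp
  have dsq: "d^2 = e1^2 - 4*e2" unfolding d_def using dp by (rule real_sqrt_pow2)
  have "d \<le> sqrt (e1^2)" unfolding d_def using e2 by (intro real_sqrt_le_mono) simp
  then have dle: "d \<le> e1" using e1 by simp
  have m2: "0 \<le> m2" and m12: "m2 \<le> m1" unfolding m1_def m2_def using dle d0 by auto
  have sum: "m1 + m2 = e1" and prod: "m1 * m2 = e2"
    unfolding m1_def m2_def using dsq by (auto simp: field_simps power2_eq_square)
  define w where "w = [complex_of_real m1, complex_of_real m2, 0, 0]"
  have pw: "char_poly R = prod_list (map (\<lambda>\<mu>. [:- \<mu>, 1:]) w)"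
  proof -
    have "poly (char_poly R) x = poly (prod_list (map (\<lambda>\<mu>. [:- \<mu>, 1:]) w)) x" for x
    proof -
      have "poly (char_poly R) x = x^2 * (x^2 - of_real e1 * x + of_real e2)"
        unfolding cp by (simp add: poly_monom algebra_simps power2_eq_square)
      also have "\<dots> = x^2 * ((x - of_real m1) * (x - of_real m2))"
        unfolding sum[symmetric] prod[symmetric] by (simp add: algebra_simps power2_eq_square)
      also have "\<dots> = poly (prod_list (map (\<lambda>\<mu>. [:- \<mu>, 1:]) w)) x"
        unfolding w_def by (simp add: algebra_simps power2_eq_square)
      finally show ?thesis .
    qed
    then have "poly (char_poly R) = poly (prod_list (map (\<lambda>\<mu>. [:- \<mu>, 1:]) w))" by (rule ext)
    then show ?thesis unfolding poly_eq_poly_eq_iff .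
  qed
  define es where "es = eigvals4 R"
  have "length es = 4 \<and> char_poly R = prod_list (map (\<lambda>\<mu>. [:- \<mu>, 1:]) es)"
    unfolding es_def eigvals4_def
    by (rule someI[of _ w]) (simp add: w_def pw[unfolded w_def])
  then have pe: "char_poly R = prod_list (map (\<lambda>\<mu>. [:- \<mu>, 1:]) es)" by simp
  have mes: "mset es = mset w"
  proof (rule multiset_eqI)
    fix x
    show "count (mset es) x = count (mset w) x"
      using order_prod_lin[of x es] order_prod_lin[of x w] pe pw by simp
  qed
  have mmap: "mset (map (\<lambda>\<mu>. sqrt (Re \<mu>)) es) = mset [0, 0, sqrt m2, sqrt m1]"
    unfolding mset_map mes by (simp add: w_def add_mset_commute)
  have srt: "sorted [0, 0, sqrt m2, sqrt m1]" using m2 m12 by simp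
  have "sort (map (\<lambda>\<mu>. sqrt (Re \<mu>)) es) = [0, 0, sqrt m2, sqrt m1]"
    by (rule properties_for_sort[OF mmap[symmetric] srt])
  then show ?thesis unfolding es_def m1_def m2_def d_def by simp
qed

lemma sum13: "(\<Sum>k\<in>{1..3::nat}. f k) = f 1 + f 2 + (f 3 :: real)"
proof -
  have "{1..3::nat} = {1,2,3}" by auto
  then show ?thesis by (simp add: add.assoc)
qed

lemma mtrace_kron: "mtrace (mat 4 4 f * kron2 X Y) =
   (\<Sum>r<4. \<Sum>s<4. f (r,s) * (X $$ (s div 2, r div 2) * Y $$ (s mod 2, r mod 2)))"
  unfolding kron2_def mat_mult_mat mtrace_def by simp

lemma pauli_entries:
  "pauli 1 $$ (0,0) = 0" "pauli 1 $$ (0,1) = 1" "pauli 1 $$ (1,0) = 1" "pauli 1 $$ (1,1) = 0"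
  "pauli 2 $$ (0,0) = 0" "pauli 2 $$ (0,1) = -\<i>" "pauli 2 $$ (1,0) = \<i>" "pauli 2 $$ (1,1) = 0"
  "pauli 3 $$ (0,0) = 1" "pauli 3 $$ (0,1) = 0" "pauli 3 $$ (1,0) = 0" "pauli 3 $$ (1,1) = -1"
  by (simp_all add: pauli_def mat_of_rows_list_def)

lemma S_herm:
  fixes f :: "nat \<times> nat \<Rightarrow> complex"
  assumes h: "\<And>r s. f (s,r) = cnj (f (r,s))"
  shows "Sval (mat 4 4 f) =
    4 * (\<Sum>r<4. \<Sum>s<4. (cmod (f (r,s)))^2)
    - 2 * ((cmod (f (0,0) + f (1,1)))^2 + (cmod (f (0,2) + f (1,3)))^2
         + (cmod (f (2,0) + f (3,1)))^2 + (cmod (f (2,2) + f (3,3)))^2)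
    - 2 * ((cmod (f (0,0) + f (2,2)))^2 + (cmod (f (0,1) + f (2,3)))^2
         + (cmod (f (1,0) + f (3,2)))^2 + (cmod (f (1,1) + f (3,3)))^2)
    + (Re (f (0,0) + f (1,1) + f (2,2) + f (3,3)))^2"
proof -
  have hd: "Im (f (r,r)) = 0" for r using arg_cong[OF h[of r r], of Im] by simp
  have h10: "f (1,0) = cnj (f (0,1))" "f (2,0) = cnj (f (0,2))" "f (3,0) = cnj (f (0,3))"
     "f (2,1) = cnj (f (1,2))" "f (3,1) = cnj (f (1,3))" "f (3,2) = cnj (f (2,3))" "f (Suc 0,0) = cnj (f (0,Suc 0))" "f (3,Suc 0) = cnj (f (Suc 0,3))"
     "f (2,Suc 0) = cnj (f (Suc 0,2))" by (rule h)+
  show ?thesis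
    unfolding Sval_def corr_def sum13 mtrace_kron
    apply (simp add: sum4 sum2 pauli_def mat_of_rows_list_def h10 hd cmod_power2)
    by (simp add: power2_eq_square algebra_simps)
qed


context
  fixes P Q :: "nat \<Rightarrow> complex"
begin

definition "vv z r = (if z = (0::nat) then P r else Q r)"
definition "VV = mat 4 2 (\<lambda>(r,z). vv z r)"
definition "Vh = mat 2 4 (\<lambda>(z,s). cnj (vv z s))"
definition "Vc = mat 4 2 (\<lambda>(r,z). cnj (vv z r))"
definition "Vt = mat 2 4 (\<lambda>(z,s). vv z s)"
definition "YY = mat 4 4 (\<lambda>(r,s). yyf r s)"
definition "rho2 = mat 4 4 (\<lambda>(r,s). P r * cnj (P s) + Q r * cnj (Q s))"

lemma rho2_eq: "rho2 = VV * Vh"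
  unfolding rho2_def VV_def Vh_def mat_mult_mat
  by (rule mat_cong2) (simp add: sum2 vv_def)

lemma rho2c_eq: "map_mat cnj rho2 = Vc * Vt"
  unfolding rho2_def Vc_def Vt_def mat_mult_mat
  by (rule eq_matI) (auto simp: sum2 vv_def)

lemma W_eq: "Vt * YY * VV = mat 2 2 (\<lambda>(a,b). bil (vv a) (vv b))"
  unfolding Vt_def YY_def VV_def mat_mult_mat
  by (rule mat_cong2) (simp add: sum4 yyf_def bil_def algebra_simps)

lemma Wc_eq: "Vh * YY * Vc = mat 2 2 (\<lambda>(a,b). cnj (bil (vv a) (vv b)))"
  unfolding Vh_def YY_def Vc_def mat_mult_mat
  by (rule mat_cong2) (simp add: sum4 yyf_def bil_def algebra_simps)

lemma vv0: "vv 0 = P" and vv1: "vv 1 = Q" "vv (Suc 0) = Q"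
  by (auto simp: vv_def fun_eq_iff)

lemma dims[simp]: "dim_row VV = 4" "dim_col VV = 2" "dim_row Vh = 2" "dim_col Vh = 4"
  "dim_row Vc = 4" "dim_col Vc = 2" "dim_row Vt = 2" "dim_col Vt = 4" "dim_row YY = 4" "dim_col YY = 4"
  by (auto simp: VV_def Vh_def Vc_def Vt_def YY_def)

lemma R_eq: "rho2 * YY * map_mat cnj rho2 * YY = VV * (Vh * YY * Vc * Vt * YY)"
  unfolding rho2c_eq unfolding rho2_eq
  by (simp only: assoc' dims index_mult_mat(2,3))

lemma MV_eq: "(Vh * YY * Vc * Vt * YY) * VV = (Vh * YY * Vc) * (Vt * YY * VV)"
  by (simp only: assoc' dims index_mult_mat(2,3))

definition "MM = Vh * YY * Vc * Vt * YY"
definition "aa = bil P P"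
definition "bb = bil P Q"
definition "cc = bil Q Q"

lemma bil_sym: "bil x y = bil y x" by (simp add: bil_def algebra_simps)

lemma MV_mat: "MM * VV = mat 2 2 (\<lambda>(i,j). \<Sum>k<2. cnj (bil (vv i) (vv k)) * bil (vv k) (vv j))"
  unfolding MM_def MV_eq unfolding W_eq Wc_eq mat_mult_mat by simp

definition "TT = [: (cnj aa * cnj cc - cnj bb ^ 2) * (aa * cc - bb ^ 2),
                  - (aa * cnj aa + 2 * (bb * cnj bb) + cc * cnj cc), 1 :]"

lemma cpMV: "char_poly (MM * VV) = TT"
  unfolding MV_mat cp2 TT_def
  by (simp add: sum2 vv0 vv1 aa_def bb_def cc_def bil_sym[of Q P] algebra_simps power2_eq_square)

lemma cpR: "char_poly (rho2 * YY * map_mat cnj rho2 * YY) = monom 1 2 * TT"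
proof -
  have c: "VV \<in> carrier_mat 4 2" "MM \<in> carrier_mat 2 4"
    by (intro carrier_matI, simp_all only: MM_def index_mult_mat(2,3) dims)+
  have "monom 1 2 * char_poly (VV * MM) = monom 1 4 * char_poly (MM * VV)"
    by (rule sylvester_poly[OF c])
  also have "monom 1 4 = monom 1 2 * (monom 1 2 :: complex poly)"
    by (simp add: mult_monom)
  finally have e: "monom 1 2 * char_poly (VV * MM) = monom 1 2 * (monom 1 2 * TT)"
    unfolding cpMV by (simp add: mult.assoc)
  have "char_poly (VV * MM) = monom 1 2 * TT"
    using e by (simp add: monom_eq_0_iff)
  then show ?thesis unfolding R_eq MM_def .
qed

lemma conc_rho2: "(concurrence rho2)^2 =
   (cmod aa)^2 + 2 * (cmod bb)^2 + (cmod cc)^2 - 2 * cmod (aa * cc - bb^2)"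
proof -
  define D where "D = aa * cc - bb^2"
  define e1 where "e1 = (cmod aa)^2 + 2 * (cmod bb)^2 + (cmod cc)^2"
  define e2 where "e2 = (cmod D)^2"
  have TT: "TT = [: complex_of_real e2, - complex_of_real e1, 1 :]"
  proof -
    have "(cnj aa * cnj cc - cnj bb ^ 2) * (aa * cc - bb ^ 2) = cnj D * D" by (simp add: D_def)
    also have "\<dots> = complex_of_real e2" unfolding e2_def complex_norm_square by simp
    finally have 1: "(cnj aa * cnj cc - cnj bb ^ 2) * (aa * cc - bb ^ 2) = complex_of_real e2" .
    have 2: "aa * cnj aa + 2 * (bb * cnj bb) + cc * cnj cc = complex_of_real e1"
      unfolding e1_def of_real_add of_real_mult of_real_numeral complex_norm_square ..
    show ?thesis unfolding TT_def 1 2 ..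
  qed
  have e2n: "0 \<le> e2" unfolding e2_def by simp
  have e1n: "0 \<le> e1" unfolding e1_def by simp
  have Dle: "cmod D \<le> cmod aa * cmod cc + (cmod bb)^2"
    unfolding D_def by (metis norm_triangle_ineq4 norm_mult norm_power)
  have "2 * (cmod aa * cmod cc) \<le> (cmod aa)^2 + (cmod cc)^2"
    using sum_squares_bound[of "cmod aa" "cmod cc"] by (simp add: power2_eq_square)
  then have D2: "2 * cmod D \<le> e1" using Dle unfolding e1_def by linarith
  have disc: "4 * e2 \<le> e1^2"
  proof -
    have "(2 * cmod D)^2 \<le> e1^2" using D2 by (intro power_mono) auto
    then show ?thesis unfolding e2_def by (simp add: power_mult_distrib)
  qed
  have cpR': "char_poly (rho2 * kron2 (pauli 2) (pauli 2) * map_mat cnj rho2 * kron2 (pauli 2) (pauli 2)) =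
     monom 1 2 * [: complex_of_real e2, - complex_of_real e1, 1 :]"
    unfolding yy_eq YY_def[symmetric] cpR TT ..
  define d where "d = sqrt (e1^2 - 4*e2)"
  define m1 where "m1 = (e1 + d)/2"
  define m2 where "m2 = (e1 - d)/2"
  have dp: "0 \<le> e1^2 - 4*e2" using disc by linarith
  have d0: "0 \<le> d" unfolding d_def using dp by simp
  have dsq: "d^2 = e1^2 - 4*e2" unfolding d_def using dp by (rule real_sqrt_pow2)
  have "d \<le> sqrt (e1^2)" unfolding d_def using e2n by (intro real_sqrt_le_mono) simp
  then have dle: "d \<le> e1" using e1n by simp
  have m2: "0 \<le> m2" and m12: "m2 \<le> m1" unfolding m1_def m2_def using dle d0 by auto
  have sum: "m1 + m2 = e1" and prod: "m1 * m2 = e2"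
    unfolding m1_def m2_def using dsq by (auto simp: field_simps power2_eq_square)
  have lam: "rev (sort (map (\<lambda>\<mu>. sqrt (Re \<mu>)) (eigvals4 (rho2 * kron2 (pauli 2) (pauli 2) * map_mat cnj rho2 * kron2 (pauli 2) (pauli 2))))) =
     [sqrt m1, sqrt m2, 0, 0]"
    unfolding m1_def m2_def d_def by (rule conc_from_cp[OF cpR' e2n disc e1n])
  have sq: "sqrt m2 \<le> sqrt m1" using m12 by simp
  have c: "concurrence rho2 = sqrt m1 - sqrt m2"
    unfolding concurrence_def Let_def lam using sq by simp
  have "(sqrt m1 - sqrt m2)^2 = m1 + m2 - 2 * sqrt (m1 * m2)"
    using m2 m12 by (simp add: power2_diff real_sqrt_mult)
  also have "\<dots> = e1 - 2 * cmod D" unfolding sum prod e2_def by simp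
  finally show ?thesis unfolding c e1_def D_def .
qed
end


definition "Fro f = (\<Sum>r<4. \<Sum>s<4. (cmod (f (r,s)))^2)"
definition "FrA f = (cmod (f (0,0) + f (1,1)))^2 + (cmod (f (0,2) + f (1,3)))^2
         + (cmod (f (2,0) + f (3,1)))^2 + (cmod (f (2,2) + f (3,3)))^2"
definition "FrB f = (cmod (f (0,0) + f (2,2)))^2 + (cmod (f (0,1) + f (2,3)))^2
         + (cmod (f (1,0) + f (3,2)))^2 + (cmod (f (1,1) + f (3,3)))^2"
definition "tval P Q = (cmod (bil P P))^2 + 2 * (cmod (bil P Q))^2 + (cmod (bil Q Q))^2"
definition "DD P Q = bil P P * bil Q Q - (bil P Q)^2"
definition "ff P Q = (\<lambda>(r,s). P r * cnj (P s) + Q r * cnj (Q s))"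

definition "PAB a = (\<lambda>r. a (r div 2) (r mod 2) (0::nat))"
definition "QAB a = (\<lambda>r. a (r div 2) (r mod 2) (1::nat))"
definition "PAC a = (\<lambda>r. a (r div 2) (0::nat) (r mod 2))"
definition "QAC a = (\<lambda>r. a (r div 2) (1::nat) (r mod 2))"
definition "PBC a = (\<lambda>r. a (0::nat) (r div 2) (r mod 2))"
definition "QBC a = (\<lambda>r. a (1::nat) (r div 2) (r mod 2))"

lemma I2: fixes a :: "nat \<Rightarrow> nat \<Rightarrow> nat \<Rightarrow> complex"
  shows "4 * Fro (ff (PAB a) (QAB a)) - 2 * FrA (ff (PAB a) (QAB a)) - 2 * FrB (ff (PAB a) (QAB a))
    = 2 * tval (PAB a) (QAB a) - tval (PAC a) (QAC a) - tval (PBC a) (QBC a)"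
proof -
  have "complex_of_real (4 * Fro (ff (PAB a) (QAB a)) - 2 * FrA (ff (PAB a) (QAB a)) - 2 * FrB (ff (PAB a) (QAB a)))
    = complex_of_real (2 * tval (PAB a) (QAB a) - tval (PAC a) (QAC a) - tval (PBC a) (QBC a))"
    unfolding Fro_def FrA_def FrB_def tval_def
    apply (simp only: sum4 of_real_add of_real_diff of_real_mult of_real_numeral complex_norm_square)
    apply (simp add: ff_def PAB_def QAB_def PAC_def QAC_def PBC_def QBC_def bil_def)
    apply (simp add: algebra_simps)
    done
  then show ?thesis by (simp only: of_real_eq_iff)
qed

lemma D_AC: "DD (PAB a) (QAB a) = DD (PAC a) (QAC a)"
  by (simp add: DD_def PAB_def QAB_def PAC_def QAC_def bil_def algebra_simps power2_eq_square)

lemma D_BC: "DD (PAB a) (QAB a) = DD (PBC a) (QBC a)"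
  by (simp add: DD_def PAB_def QAB_def PBC_def QBC_def bil_def algebra_simps power2_eq_square)


lemma conc_gen: "(concurrence (rho2 P Q))^2 = tval P Q - 2 * cmod (DD P Q)"
  using conc_rho2[of P Q] by (simp add: tval_def DD_def aa_def bb_def cc_def)

lemma S_rho2: "Sval (rho2 P Q) = 4 * Fro (ff P Q) - 2 * FrA (ff P Q) - 2 * FrB (ff P Q)
   + (Re (ff P Q (0,0) + ff P Q (1,1) + ff P Q (2,2) + ff P Q (3,3)))^2"
proof -
  have e: "rho2 P Q = mat 4 4 (ff P Q)" by (simp add: rho2_def ff_def)
  have h: "\<And>r s. ff P Q (s,r) = cnj (ff P Q (r,s))" by (simp add: ff_def)
  show ?thesis unfolding e S_herm[of "ff P Q", OF h] Fro_def FrA_def FrB_def ..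
qed

lemma trace_AB: fixes a :: "nat \<Rightarrow> nat \<Rightarrow> nat \<Rightarrow> complex"
  shows "Re (ff (PAB a) (QAB a) (0,0) + ff (PAB a) (QAB a) (1,1) + ff (PAB a) (QAB a) (2,2)
    + ff (PAB a) (QAB a) (3,3)) = (\<Sum>x<2. \<Sum>y<2. \<Sum>z<2. (cmod (a x y z))^2)"
  unfolding cmod_power2 by (simp add: ff_def PAB_def QAB_def sum2 power2_eq_square algebra_simps)

lemma iff_aux: "(s::real) - 1 = t \<Longrightarrow> 2 * x - y - z = t \<Longrightarrow> (1 < s \<longleftrightarrow> x > (y + z) / 2)"
  by (auto simp: field_simps)

lemma core:
  fixes a :: "nat \<Rightarrow> nat \<Rightarrow> nat \<Rightarrow> complex"
  assumes N: "(\<Sum>x<2. \<Sum>y<2. \<Sum>z<2. (cmod (a x y z))^2) = 1"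
  shows "Sval (rho2 (PAB a) (QAB a)) > 1 \<longleftrightarrow>
    (concurrence (rho2 (PAB a) (QAB a)))^2 >
      ((concurrence (rho2 (PAC a) (QAC a)))^2 + (concurrence (rho2 (PBC a) (QBC a)))^2) / 2"
proof -
  have S: "Sval (rho2 (PAB a) (QAB a)) - 1 =
      2 * tval (PAB a) (QAB a) - tval (PAC a) (QAC a) - tval (PBC a) (QBC a)"
    unfolding S_rho2 trace_AB N I2[symmetric] by simp
  have C: "2 * (concurrence (rho2 (PAB a) (QAB a)))^2 - (concurrence (rho2 (PAC a) (QAC a)))^2
      - (concurrence (rho2 (PBC a) (QBC a)))^2 =
      2 * tval (PAB a) (QAB a) - tval (PAC a) (QAC a) - tval (PBC a) (QBC a)"
    unfolding conc_gen D_AC[symmetric] D_BC[symmetric] by simp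
  show ?thesis by (rule iff_aux[OF S C])
qed

theorem corollary2:
  fixes psi :: "nat \<Rightarrow> nat \<Rightarrow> nat \<Rightarrow> complex" and i j k :: qubit
  assumes "normalized3 psi"
    and "i \<noteq> j" and "j \<noteq> k" and "i \<noteq> k"
  shows "Sval (reduced psi i j k) > 1 \<longleftrightarrow>
         (concurrence (reduced psi i j k))\<^sup>2 >
           ((concurrence (reduced psi i k j))\<^sup>2 + (concurrence (reduced psi j k i))\<^sup>2) / 2"
proof -
  define phi where "phi x y z = amp psi ((\<lambda>_. 0)(i := x, j := y, k := z))" for x y z
  have N: "(\<Sum>x<2. \<Sum>y<2. \<Sum>z<2. (cmod (phi x y z))^2) = 1"
    using assms unfolding phi_def normalized3_def amp_def
    by (cases i; cases j; cases k) (simp_all add: sum2 add_ac)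
  have u2: "(\<lambda>_. 0)(i := x, k := z, j := y) = ((\<lambda>_. 0)(i := x, j := y, k := z) :: qubit \<Rightarrow> nat)" for x y z
    using assms(2-4) by (auto simp: fun_eq_iff)
  have u3: "(\<lambda>_. 0)(j := y, k := z, i := x) = ((\<lambda>_. 0)(i := x, j := y, k := z) :: qubit \<Rightarrow> nat)" for x y z
    using assms(2-4) by (auto simp: fun_eq_iff)
  have R1: "reduced psi i j k = rho2 (PAB phi) (QAB phi)"
    unfolding reduced_def rho2_def
    by (rule mat_cong2) (simp add: sum2 PAB_def QAB_def phi_def)
  have R2: "reduced psi i k j = rho2 (PAC phi) (QAC phi)"
    unfolding reduced_def rho2_def
    by (rule mat_cong2) (simp add: sum2 PAC_def QAC_def phi_def u2)
  have R3: "reduced psi j k i = rho2 (PBC phi) (QBC phi)"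
    unfolding reduced_def rho2_def
    by (rule mat_cong2) (simp add: sum2 PBC_def QBC_def phi_def u3)
  show ?thesis unfolding R1 R2 R3 by (rule core[OF N])
qed

end
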